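(* Let $K$ be a virtual knot diagram. If $W_K(t)\neq W_K(t^{-1})$, then the flat virtual knot $F(K)$ is nontrivial, i.e. not equivalent to the flat diagram of an embedded circle with no crossings.
   Context: Virtual knot diagrams, real crossings with writhes $w(c)\in\{\pm1\}$, generalized Reidemeister moves as usual. Gauss diagram $G(K)$: counterclockwise circle with, for each real crossing $c$, a chord directed from the overcrossing preimage to the undercrossing preimage, signed $w(c)$. A chord $d$ crosses $c$ if their endpoints interlace; viewing $c$ as an arrow in the disk, $d$ crosses $c$ from left to right if its tail is left of $c$ and its head right of $c$, else from right to left. With $r_\pm(c)$, $l_\pm(c)$ the numbers of chords of sign $\pm$ crossing $c$ from left to right, resp. right to left, $\mathrm{Ind}(c)=r_+(c)-r_-(c)-l_+(c)+l_-(c)$. Writhe polynomial $W_K(t)=\sum_{n\neq0}a_n(K)t^n$ with $a_n(K)=\sum_{\mathrm{Ind}(c)=n}w(c)$. $F(K)$ is the flat virtual knot obtained by replacing every real crossing of $K$ by a flat crossing; flat virtual knots are considered up to flat generalized Reidemeister moves. *)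

theory Defs
  imports Main
begin

text \<open>Gauss diagrams are encoded as Gauss words: the list of chord endpoints in
counterclockwise order around the circle (starting at an arbitrary base point).
An endpoint is a pair (chord label, is_tail); for a real Gauss diagram the tail is
the overcrossing preimage. Signs (writhes) are given by a function on labels.\<close>

type_synonym gword = "(nat \<times> bool) list"

definition gauss_wf :: "gword \<Rightarrow> bool" where
  "gauss_wf w \<longleftrightarrow> distinct w \<and> (\<forall>c b. (c, b) \<in> set w \<longrightarrow> (c, \<not> b) \<in> set w)"

definition gchords :: "gword \<Rightarrow> nat set" where
  "gchords w = fst ` set w"

definition gpos :: "gword \<Rightarrow> nat \<times> bool \<Rightarrow> nat" where
  "gpos w x = (THE i. i < length w \<and> w ! i = x)"

definition tailpos :: "gword \<Rightarrow> nat \<Rightarrow> nat" where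
  "tailpos w c = gpos w (c, True)"

definition headpos :: "gword \<Rightarrow> nat \<Rightarrow> nat" where
  "headpos w c = gpos w (c, False)"

definition in_arc :: "nat \<Rightarrow> nat \<Rightarrow> nat \<Rightarrow> bool" where
  "in_arc p q i = (if p < q then p < i \<and> i < q else p < i \<or> i < q)"

text \<open>The circle is oriented counterclockwise, so the points on the counterclockwise
arc from the tail to the head of the arrow c lie to the right of c.\<close>
definition on_right :: "gword \<Rightarrow> nat \<Rightarrow> nat \<Rightarrow> bool" where
  "on_right w c i = in_arc (tailpos w c) (headpos w c) i"

definition crosses_LR :: "gword \<Rightarrow> nat \<Rightarrow> nat \<Rightarrow> bool" where
  "crosses_LR w c d \<longleftrightarrow> d \<noteq> c \<and> \<not> on_right w c (tailpos w d) \<and> on_right w c (headpos w d)"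

definition crosses_RL :: "gword \<Rightarrow> nat \<Rightarrow> nat \<Rightarrow> bool" where
  "crosses_RL w c d \<longleftrightarrow> d \<noteq> c \<and> on_right w c (tailpos w d) \<and> \<not> on_right w c (headpos w d)"

text \<open>Ind(c) = r_+ - r_- - l_+ + l_-.\<close>
definition gind :: "gword \<Rightarrow> (nat \<Rightarrow> int) \<Rightarrow> nat \<Rightarrow> int" where
  "gind w s c = (\<Sum>d\<in>{d \<in> gchords w. crosses_LR w c d}. s d)
              - (\<Sum>d\<in>{d \<in> gchords w. crosses_RL w c d}. s d)"

text \<open>Coefficient a_n of t^n in the writhe polynomial (a_0 = 0 as n ranges over n \<noteq> 0).\<close>
definition writhe_coeff :: "gword \<Rightarrow> (nat \<Rightarrow> int) \<Rightarrow> int \<Rightarrow> int" where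
  "writhe_coeff w s n = (if n = 0 then 0 else (\<Sum>c\<in>{c \<in> gchords w. gind w s c = n}. s c))"

text \<open>Flattening: a flat chord points from the preimage on strand s1 to the one on s2,
where s2 crosses s1 from right to left. For a real crossing this is the over-to-under
arrow if the writhe is +1 and the reversed arrow if the writhe is -1.\<close>
definition flatten :: "gword \<Rightarrow> (nat \<Rightarrow> int) \<Rightarrow> gword" where
  "flatten w s = map (\<lambda>(c, b). (c, if s c = 1 then b else \<not> b)) w"

text \<open>Flat Reidemeister III configuration: three segments (in word order 1,2,3), the
triangle with counterclockwise side order (1,2,3) if o, else (1,3,2); e i says whether
strand i traverses its side counterclockwise. x, y, z are the chords at the vertices
12, 13, 23.\<close>
definition r3_seg :: "bool \<Rightarrow> (nat \<Rightarrow> bool) \<Rightarrow> nat \<Rightarrow> nat \<Rightarrow> nat \<Rightarrow> nat \<Rightarrow> gword" where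
  "r3_seg ccw e x y z i =
    (let nx = (\<lambda>j::nat. if ccw then (if j = 1 then 2 else if j = 2 then 3 else 1)
                              else (if j = 1 then 3 else if j = 3 then 2 else 1));
         pv = (\<lambda>j::nat. if ccw then (if j = 1 then 3 else if j = 2 then 1 else 2)
                              else (if j = 1 then 2 else if j = 3 then 1 else 3));
         lab = (\<lambda>j k::nat. if {j, k} = {1, 2} then x else if {j, k} = {1, 3} then y else z);
         P = (lab (pv i) i, e (pv i) \<noteq> e i);
         N = (lab i (nx i), e i = e (nx i))
     in if e i then [P, N] else [N, P])"

inductive flat_step :: "gword \<Rightarrow> gword \<Rightarrow> bool" where
  rotate: "flat_step w (rotate1 w)"
| relabel: "inj_on f (gchords w) \<Longrightarrow> flat_step w (map (\<lambda>(c, b). (f c, b)) w)"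
| R1: "c \<notin> gchords (u @ v) \<Longrightarrow> flat_step (u @ [(c, b), (c, \<not> b)] @ v) (u @ v)"
| R2: "c \<noteq> d \<Longrightarrow> c \<notin> gchords (u @ v @ z) \<Longrightarrow> d \<notin> gchords (u @ v @ z) \<Longrightarrow>
       p \<in> {[(c, \<not> b), (d, b)], [(d, b), (c, \<not> b)]} \<Longrightarrow>
       flat_step (u @ [(c, b), (d, \<not> b)] @ v @ p @ z) (u @ v @ z)"
| R3: "distinct [x, y, z] \<Longrightarrow> {x, y, z} \<inter> gchords (u @ v @ q @ t) = {} \<Longrightarrow>
       s1 = r3_seg ccw e x y z 1 \<Longrightarrow> s2 = r3_seg ccw e x y z 2 \<Longrightarrow> s3 = r3_seg ccw e x y z 3 \<Longrightarrow>
       flat_step (u @ s1 @ v @ s2 @ q @ s3 @ t) (u @ rev s1 @ v @ rev s2 @ q @ rev s3 @ t)"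

definition flat_equiv :: "gword \<Rightarrow> gword \<Rightarrow> bool" where
  "flat_equiv = (symclp flat_step)\<^sup>*\<^sup>*"

end

theory Submission
  imports Defs
begin

definition sgm :: "nat \<times> bool \<Rightarrow> int" where "sgm e = (if snd e then -1 else 1)"
definition sgn1 :: "nat \<times> bool \<Rightarrow> int" where "sgn1 e = (if snd e then 1 else -1)"
definition stp :: "nat \<Rightarrow> nat \<times> int \<times> int \<Rightarrow> nat \<times> bool \<Rightarrow> nat \<times> int \<times> int" where
 "stp c st e = (if fst e = c then (if fst st = 0 then (1, sgn1 e, 0) else (2, fst (snd st), snd (snd st)))
     else (if fst st = 1 then (1, fst (snd st), snd (snd st) + sgm e) else st))"
definition SS :: "gword \<Rightarrow> int" where "SS l = sum_list (map sgm l)"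
definition fiF :: "gword \<Rightarrow> nat \<Rightarrow> int" where
 "fiF w c = (let st = foldl (stp c) (0,0,0) w in fst (snd st) * snd (snd st))"
definition Inv :: "(int \<Rightarrow> int) \<Rightarrow> gword \<Rightarrow> int" where
 "Inv g w = (\<Sum>c\<in>gchords w. g (fiF w c))"

lemma nochord: "c \<notin> fst ` set l \<Longrightarrow> foldl (stp c) st l =
   (fst st, fst (snd st), if fst st = 1 then snd (snd st) + SS l else snd (snd st))"
  by (induction l arbitrary: st) (auto simp: stp_def SS_def)

lemma replace: "c \<notin> fst ` set m \<Longrightarrow> c \<notin> fst ` set m' \<Longrightarrow> SS m = SS m' \<Longrightarrow>
   fiF (A @ m @ B) c = fiF (A @ m' @ B) c"
  by (simp add: fiF_def nochord)

lemma SS_append[simp]: "SS (xs @ ys) = SS xs + SS ys" by (simp add: SS_def)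
lemma SS_Cons[simp]: "SS (x # ys) = sgm x + SS ys" by (simp add: SS_def)
lemma SS_Nil[simp]: "SS [] = 0" by (simp add: SS_def)
lemma SS_rev[simp]: "SS (rev xs) = SS xs" by (metis SS_def rev_map sum_list_rev)

lemma linear: "c \<notin> fst ` set a \<Longrightarrow> c \<notin> fst ` set b \<Longrightarrow> fst e1 = c \<Longrightarrow> fst e2 = c \<Longrightarrow>
   fiF (a @ [e1] @ b @ [e2] @ d) c = sgn1 e1 * SS b"
proof -
  have two: "foldl (stp c) (2, x, y) l = (2, x, y)" for l x y
    by (induction l) (auto simp: stp_def)
  assume "c \<notin> fst ` set a" "c \<notin> fst ` set b" "fst e1 = c" "fst e2 = c"
  then show ?thesis by (simp add: fiF_def nochord stp_def two)
qed

lemma decomp: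
  assumes "gauss_wf v" "c \<in> gchords v"
  shows "\<exists>a e1 b e2 d. v = a @ [e1] @ b @ [e2] @ d \<and> fst e1 = c \<and> fst e2 = c \<and> snd e2 = (\<not> snd e1)
     \<and> c \<notin> fst ` set a \<and> c \<notin> fst ` set b \<and> c \<notin> fst ` set d"
proof -
  from assms obtain b0 where b0: "(c, b0) \<in> set v" by (auto simp: gchords_def)
  then have "\<exists>x\<in>set v. fst x = c" by force
  from split_list_first_prop[OF this] obtain a e1 r where v: "v = a @ e1 # r" and e1: "fst e1 = c"
    and a: "\<forall>y\<in>set a. fst y \<noteq> c" by blast
  have "e1 \<in> set v" using v by simp
  then have "(fst e1, \<not> snd e1) \<in> set v" using assms(1) unfolding gauss_wf_def by (cases e1) auto
  then have "(c, \<not> snd e1) \<in> set v" using e1 by simp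
  moreover have "(c, \<not> snd e1) \<noteq> e1" by (cases e1) auto
  ultimately have "(c, \<not> snd e1) \<in> set r" using v a by auto
  then have "\<exists>x\<in>set r. fst x = c" by force
  from split_list_first_prop[OF this] obtain b e2 d where r: "r = b @ e2 # d" and e2: "fst e2 = c"
    and b: "\<forall>y\<in>set b. fst y \<noteq> c" by blast
  have dist: "distinct v" using assms(1) by (simp add: gauss_wf_def)
  have "e2 \<noteq> e1" using dist v r by auto
  then have s: "snd e2 = (\<not> snd e1)" using e1 e2 by (cases e1; cases e2) auto
  have "c \<notin> fst ` set d"
  proof
    assume "c \<in> fst ` set d"
    then obtain y where y: "y \<in> set d" "fst y = c" by auto
    have "snd y = snd e1 \<or> snd y = snd e2" using s by auto
    then have "y = e1 \<or> y = e2" using y(2) e1 e2 by (auto intro: prod_eqI)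
    then show False using dist v r y by auto
  qed
  then show ?thesis using v r e1 e2 s a b by (intro exI[of _ a] exI[of _ e1] exI[of _ b] exI[of _ e2] exI[of _ d]) auto
qed

lemma total_zero:
  assumes "gauss_wf v" shows "SS v = 0"
proof -
  have dist: "distinct v" using assms by (simp add: gauss_wf_def)
  let ?h = "\<lambda>(c::nat, b::bool). (c, \<not> b)"
  have hs: "?h ` set v = set v" using assms unfolding gauss_wf_def by (force simp: image_iff)
  have inj: "inj_on ?h (set v)" by (auto simp: inj_on_def)
  have "SS v = (\<Sum>x\<in>set v. sgm x)" using dist by (simp add: SS_def sum_list_distinct_conv_sum_set)
  also have "\<dots> = (\<Sum>x\<in>?h ` set v. sgm x)" using hs by simp
  also have "\<dots> = (\<Sum>x\<in>set v. sgm (?h x))" using inj by (simp add: sum.reindex)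
  also have "\<dots> = - (\<Sum>x\<in>set v. sgm x)"
    by (subst sum_negf[symmetric]) (auto intro!: sum.cong simp: sgm_def split_def)
  finally show ?thesis using dist by (simp add: SS_def sum_list_distinct_conv_sum_set)
qed

lemma finite_gchords[simp]: "finite (gchords w)" by (simp add: gchords_def)

lemma rot_fi:
  assumes "gauss_wf (x # xs)" "c \<in> gchords (x # xs)"
  shows "fiF (xs @ [x]) c = fiF (x # xs) c"
proof -
  obtain a e1 b e2 d where v: "x # xs = a @ [e1] @ b @ [e2] @ d" and f: "fst e1 = c" "fst e2 = c"
    "snd e2 = (\<not> snd e1)" "c \<notin> fst ` set a" "c \<notin> fst ` set b" "c \<notin> fst ` set d"
    using decomp[OF assms] by blast
  have t: "SS (x # xs) = 0" using total_zero[OF assms(1)] .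
  have L: "fiF (x # xs) c = sgn1 e1 * SS b" unfolding v using f by (intro linear) auto
  show ?thesis
  proof (cases a)
    case Nil
    then have "xs @ [x] = b @ [e2] @ d @ [e1]" using v by simp
    then have "fiF (xs @ [x]) c = sgn1 e2 * SS d" using f linear[of c b d e2 e1 "[]"] by simp
    moreover have "SS b + SS d + sgm e1 + sgm e2 = 0" using t v Nil by simp
    ultimately show ?thesis using L f by (auto simp: sgm_def sgn1_def)
  next
    case (Cons y a')
    then have "xs @ [x] = a' @ [e1] @ b @ [e2] @ (d @ [x])" using v by simp
    then show ?thesis using L f Cons linear[of c a' b e1 e2 "d @ [x]"] by simp
  qed
qed

lemma relabel_fi:
  assumes "gauss_wf w" "c \<in> gchords w" "inj_on f (gchords w)"
  shows "fiF (map (\<lambda>(c, b). (f c, b)) w) (f c) = fiF w c"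
proof -
  obtain a e1 b e2 d where v: "w = a @ [e1] @ b @ [e2] @ d" and fe: "fst e1 = c" "fst e2 = c"
    "snd e2 = (\<not> snd e1)" "c \<notin> fst ` set a" "c \<notin> fst ` set b" "c \<notin> fst ` set d"
    using decomp[OF assms(1,2)] by blast
  let ?h = "\<lambda>(c::nat, b::bool). (f c, b)"
  have nin: "f c \<notin> fst ` set (map ?h l)" if "set l \<subseteq> set w" "c \<notin> fst ` set l" for l
  proof
    assume "f c \<in> fst ` set (map ?h l)"
    then obtain c' b' where cb: "(c', b') \<in> set l" "f c' = f c" by auto
    then have "c' \<in> gchords w" using that by (force simp: gchords_def)
    then have "c' = c" using cb assms(2,3) by (auto dest: inj_onD)
    then show False using cb that by force
  qed
  have hm: "map ?h w = map ?h a @ [?h e1] @ map ?h b @ [?h e2] @ map ?h d" using v by simp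
  have "SS (map ?h b) = SS b" by (induction b) (auto simp: sgm_def split_def)
  moreover have "sgn1 (?h e1) = sgn1 e1" by (simp add: sgn1_def split_def)
  moreover have "fiF (map ?h w) (f c) = sgn1 (?h e1) * SS (map ?h b)"
    unfolding hm apply (rule linear) using nin[of a] nin[of b] v fe by (auto simp: split_def)
  ultimately have "fiF (map ?h w) (f c) = sgn1 e1 * SS b" by simp
  moreover have "fiF w c = sgn1 e1 * SS b" using v fe linear[of c a b e1 e2 d] by simp
  ultimately show ?thesis by simp
qed

lemma Inv_rotate:
  assumes "gauss_wf w" shows "Inv g (rotate1 w) = Inv g w"
proof (cases w)
  case Nil then show ?thesis by simp
next
  case (Cons x xs)
  have ch: "gchords (xs @ [x]) = gchords (x # xs)" by (auto simp: gchords_def)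
  show ?thesis unfolding Inv_def Cons rotate1.simps ch
    by (rule sum.cong) (use rot_fi assms Cons in auto)
qed

lemma Inv_relabel:
  assumes "gauss_wf w" "inj_on f (gchords w)"
  shows "Inv g (map (\<lambda>(c, b). (f c, b)) w) = Inv g w"
proof -
  have ch: "gchords (map (\<lambda>(c, b). (f c, b)) w) = f ` gchords w"
    by (force simp: gchords_def image_iff)
  show ?thesis unfolding Inv_def ch
    using assms relabel_fi[OF assms(1) _ assms(2)] by (simp add: sum.reindex)
qed

lemma odd0: "(\<And>m. g (- m) = - g m) \<Longrightarrow> g (0::int) = (0::int)"
proof -
  assume h: "\<And>m. g (- m) = - g m"
  from h[of 0] have "g 0 = - g 0" by simp
  then show ?thesis by linarith
qed

lemma Inv_R1:
  assumes "c \<notin> gchords (u @ v)" "\<And>m. g (- m) = - g m"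
  shows "Inv g (u @ [(c, b), (c, \<not> b)] @ v) = Inv g (u @ v)"
proof -
  let ?L = "u @ [(c, b), (c, \<not> b)] @ v"
  have ch: "gchords ?L = insert c (gchords (u @ v))" by (auto simp: gchords_def)
  have "fiF ?L c = 0" using assms(1) linear[of c u "[]" "(c,b)" "(c, \<not> b)" v]
    by (auto simp: gchords_def)
  moreover have "fiF ?L e = fiF (u @ [] @ v) e" if "e \<in> gchords (u @ v)" for e
    by (rule replace) (use that assms(1) in \<open>auto simp: sgm_def\<close>)
  ultimately show ?thesis unfolding Inv_def ch using assms odd0[of g]
    by (simp add: sum.insert)
qed

lemma Inv_R2:
  assumes "c \<noteq> d" "c \<notin> gchords (u @ v @ z)" "d \<notin> gchords (u @ v @ z)"
    "p \<in> {[(c, \<not> b), (d, b)], [(d, b), (c, \<not> b)]}" "\<And>m. g (- m) = - g m"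
  shows "Inv g (u @ [(c, b), (d, \<not> b)] @ v @ p @ z) = Inv g (u @ v @ z)"
proof -
  let ?L = "u @ [(c, b), (d, \<not> b)] @ v @ p @ z"
  have ch: "gchords ?L = insert c (insert d (gchords (u @ v @ z)))" using assms(4) by (auto simp: gchords_def)
  have nc: "c \<notin> fst ` set u" "c \<notin> fst ` set v" "c \<notin> fst ` set z"
    "d \<notin> fst ` set u" "d \<notin> fst ` set v" "d \<notin> fst ` set z" using assms(2,3) by (auto simp: gchords_def)
  have "fiF ?L c = - fiF ?L d" using assms(1,4) nc
    by (auto simp: fiF_def nochord stp_def sgm_def sgn1_def)
  then have s: "g (fiF ?L c) + g (fiF ?L d) = 0" using assms(5) by simp
  have "fiF ?L e = fiF (u @ v @ z) e" if "e \<in> gchords (u @ v @ z)" for e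
  proof -
    have "e \<noteq> c" "e \<noteq> d" using that assms(2,3) by auto
    have "fiF ?L e = fiF (u @ [] @ v @ p @ z) e"
      by (rule replace) (use \<open>e \<noteq> c\<close> \<open>e \<noteq> d\<close> in \<open>auto simp: sgm_def\<close>)
    also have "\<dots> = fiF ((u @ v) @ [] @ z) e"
      using replace[of e p "[]" "u @ v" z] \<open>e \<noteq> c\<close> \<open>e \<noteq> d\<close> assms(4) by (auto simp: sgm_def)
    finally show ?thesis by simp
  qed
  then show ?thesis unfolding Inv_def ch using assms(1,2,3) s
    by (simp add: sum.insert add.assoc[symmetric])
qed

lemma seg_ccw:
  "r3_seg True e x y z 1 = (if e 1 then [(y, e 3 \<noteq> e 1), (x, e 1 = e 2)] else [(x, e 1 = e 2), (y, e 3 \<noteq> e 1)])"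
  "r3_seg True e x y z 2 = (if e 2 then [(x, e 1 \<noteq> e 2), (z, e 2 = e 3)] else [(z, e 2 = e 3), (x, e 1 \<noteq> e 2)])"
  "r3_seg True e x y z 3 = (if e 3 then [(z, e 2 \<noteq> e 3), (y, e 3 = e 1)] else [(y, e 3 = e 1), (z, e 2 \<noteq> e 3)])"
  by (simp_all add: r3_seg_def Let_def insert_commute doubleton_eq_iff)

lemma seg_cw:
  "r3_seg False e x y z 1 = (if e 1 then [(x, e 2 \<noteq> e 1), (y, e 1 = e 3)] else [(y, e 1 = e 3), (x, e 2 \<noteq> e 1)])"
  "r3_seg False e x y z 2 = (if e 2 then [(z, e 3 \<noteq> e 2), (x, e 2 = e 1)] else [(x, e 2 = e 1), (z, e 3 \<noteq> e 2)])"
  "r3_seg False e x y z 3 = (if e 3 then [(y, e 1 \<noteq> e 3), (z, e 3 = e 2)] else [(z, e 3 = e 2), (y, e 1 \<noteq> e 3)])"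
  by (simp_all add: r3_seg_def Let_def insert_commute doubleton_eq_iff)

lemma gen_ccw_x:
  assumes "distinct [x, y, z]" "x \<notin> fst ` set u" "x \<notin> fst ` set v" "x \<notin> fst ` set q" "x \<notin> fst ` set t"
  shows "fiF (u @ (if b1 then [(y, b3 \<noteq> b1), (x, b1 = b2)] else [(x, b1 = b2), (y, b3 \<noteq> b1)]) @ v @ (if b2 then [(x, b1 \<noteq> b2), (z, b2 = b3)] else [(z, b2 = b3), (x, b1 \<noteq> b2)]) @ q @ (if b3 then [(z, b2 \<noteq> b3), (y, b3 = b1)] else [(y, b3 = b1), (z, b2 \<noteq> b3)]) @ t) x = fiF (u @ rev (if b1 then [(y, b3 \<noteq> b1), (x, b1 = b2)] else [(x, b1 = b2), (y, b3 \<noteq> b1)]) @ v @ rev (if b2 then [(x, b1 \<noteq> b2), (z, b2 = b3)] else [(z, b2 = b3), (x, b1 \<noteq> b2)]) @ q @ rev (if b3 then [(z, b2 \<noteq> b3), (y, b3 = b1)] else [(y, b3 = b1), (z, b2 \<noteq> b3)]) @ t) x"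
  using assms by (cases b1; cases b2; cases b3) (simp_all add: fiF_def nochord stp_def sgm_def sgn1_def)

lemma gen_ccw_y:
  assumes "distinct [x, y, z]" "y \<notin> fst ` set u" "y \<notin> fst ` set v" "y \<notin> fst ` set q" "y \<notin> fst ` set t"
  shows "fiF (u @ (if b1 then [(y, b3 \<noteq> b1), (x, b1 = b2)] else [(x, b1 = b2), (y, b3 \<noteq> b1)]) @ v @ (if b2 then [(x, b1 \<noteq> b2), (z, b2 = b3)] else [(z, b2 = b3), (x, b1 \<noteq> b2)]) @ q @ (if b3 then [(z, b2 \<noteq> b3), (y, b3 = b1)] else [(y, b3 = b1), (z, b2 \<noteq> b3)]) @ t) y = fiF (u @ rev (if b1 then [(y, b3 \<noteq> b1), (x, b1 = b2)] else [(x, b1 = b2), (y, b3 \<noteq> b1)]) @ v @ rev (if b2 then [(x, b1 \<noteq> b2), (z, b2 = b3)] else [(z, b2 = b3), (x, b1 \<noteq> b2)]) @ q @ rev (if b3 then [(z, b2 \<noteq> b3), (y, b3 = b1)] else [(y, b3 = b1), (z, b2 \<noteq> b3)]) @ t) y"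
  using assms by (cases b1; cases b2; cases b3) (simp_all add: fiF_def nochord stp_def sgm_def sgn1_def)

lemma gen_ccw_z:
  assumes "distinct [x, y, z]" "z \<notin> fst ` set u" "z \<notin> fst ` set v" "z \<notin> fst ` set q" "z \<notin> fst ` set t"
  shows "fiF (u @ (if b1 then [(y, b3 \<noteq> b1), (x, b1 = b2)] else [(x, b1 = b2), (y, b3 \<noteq> b1)]) @ v @ (if b2 then [(x, b1 \<noteq> b2), (z, b2 = b3)] else [(z, b2 = b3), (x, b1 \<noteq> b2)]) @ q @ (if b3 then [(z, b2 \<noteq> b3), (y, b3 = b1)] else [(y, b3 = b1), (z, b2 \<noteq> b3)]) @ t) z = fiF (u @ rev (if b1 then [(y, b3 \<noteq> b1), (x, b1 = b2)] else [(x, b1 = b2), (y, b3 \<noteq> b1)]) @ v @ rev (if b2 then [(x, b1 \<noteq> b2), (z, b2 = b3)] else [(z, b2 = b3), (x, b1 \<noteq> b2)]) @ q @ rev (if b3 then [(z, b2 \<noteq> b3), (y, b3 = b1)] else [(y, b3 = b1), (z, b2 \<noteq> b3)]) @ t) z"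
  using assms by (cases b1; cases b2; cases b3) (simp_all add: fiF_def nochord stp_def sgm_def sgn1_def)

lemma gen_cw_x:
  assumes "distinct [x, y, z]" "x \<notin> fst ` set u" "x \<notin> fst ` set v" "x \<notin> fst ` set q" "x \<notin> fst ` set t"
  shows "fiF (u @ (if b1 then [(x, b2 \<noteq> b1), (y, b1 = b3)] else [(y, b1 = b3), (x, b2 \<noteq> b1)]) @ v @ (if b2 then [(z, b3 \<noteq> b2), (x, b2 = b1)] else [(x, b2 = b1), (z, b3 \<noteq> b2)]) @ q @ (if b3 then [(y, b1 \<noteq> b3), (z, b3 = b2)] else [(z, b3 = b2), (y, b1 \<noteq> b3)]) @ t) x = fiF (u @ rev (if b1 then [(x, b2 \<noteq> b1), (y, b1 = b3)] else [(y, b1 = b3), (x, b2 \<noteq> b1)]) @ v @ rev (if b2 then [(z, b3 \<noteq> b2), (x, b2 = b1)] else [(x, b2 = b1), (z, b3 \<noteq> b2)]) @ q @ rev (if b3 then [(y, b1 \<noteq> b3), (z, b3 = b2)] else [(z, b3 = b2), (y, b1 \<noteq> b3)]) @ t) x"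
  using assms by (cases b1; cases b2; cases b3) (simp_all add: fiF_def nochord stp_def sgm_def sgn1_def)

lemma gen_cw_y:
  assumes "distinct [x, y, z]" "y \<notin> fst ` set u" "y \<notin> fst ` set v" "y \<notin> fst ` set q" "y \<notin> fst ` set t"
  shows "fiF (u @ (if b1 then [(x, b2 \<noteq> b1), (y, b1 = b3)] else [(y, b1 = b3), (x, b2 \<noteq> b1)]) @ v @ (if b2 then [(z, b3 \<noteq> b2), (x, b2 = b1)] else [(x, b2 = b1), (z, b3 \<noteq> b2)]) @ q @ (if b3 then [(y, b1 \<noteq> b3), (z, b3 = b2)] else [(z, b3 = b2), (y, b1 \<noteq> b3)]) @ t) y = fiF (u @ rev (if b1 then [(x, b2 \<noteq> b1), (y, b1 = b3)] else [(y, b1 = b3), (x, b2 \<noteq> b1)]) @ v @ rev (if b2 then [(z, b3 \<noteq> b2), (x, b2 = b1)] else [(x, b2 = b1), (z, b3 \<noteq> b2)]) @ q @ rev (if b3 then [(y, b1 \<noteq> b3), (z, b3 = b2)] else [(z, b3 = b2), (y, b1 \<noteq> b3)]) @ t) y"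
  using assms by (cases b1; cases b2; cases b3) (simp_all add: fiF_def nochord stp_def sgm_def sgn1_def)

lemma gen_cw_z:
  assumes "distinct [x, y, z]" "z \<notin> fst ` set u" "z \<notin> fst ` set v" "z \<notin> fst ` set q" "z \<notin> fst ` set t"
  shows "fiF (u @ (if b1 then [(x, b2 \<noteq> b1), (y, b1 = b3)] else [(y, b1 = b3), (x, b2 \<noteq> b1)]) @ v @ (if b2 then [(z, b3 \<noteq> b2), (x, b2 = b1)] else [(x, b2 = b1), (z, b3 \<noteq> b2)]) @ q @ (if b3 then [(y, b1 \<noteq> b3), (z, b3 = b2)] else [(z, b3 = b2), (y, b1 \<noteq> b3)]) @ t) z = fiF (u @ rev (if b1 then [(x, b2 \<noteq> b1), (y, b1 = b3)] else [(y, b1 = b3), (x, b2 \<noteq> b1)]) @ v @ rev (if b2 then [(z, b3 \<noteq> b2), (x, b2 = b1)] else [(x, b2 = b1), (z, b3 \<noteq> b2)]) @ q @ rev (if b3 then [(y, b1 \<noteq> b3), (z, b3 = b2)] else [(z, b3 = b2), (y, b1 \<noteq> b3)]) @ t) z"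
  using assms by (cases b1; cases b2; cases b3) (simp_all add: fiF_def nochord stp_def sgm_def sgn1_def)

lemma r3_x:
  "distinct [x, y, z] \<Longrightarrow> x \<notin> fst ` set u \<Longrightarrow> x \<notin> fst ` set v \<Longrightarrow> x \<notin> fst ` set q \<Longrightarrow> x \<notin> fst ` set t \<Longrightarrow>
 fiF (u @ r3_seg ccw e x y z 1 @ v @ r3_seg ccw e x y z 2 @ q @ r3_seg ccw e x y z 3 @ t) x =
         fiF (u @ rev (r3_seg ccw e x y z 1) @ v @ rev (r3_seg ccw e x y z 2) @ q @ rev (r3_seg ccw e x y z 3) @ t) x"
  apply (cases ccw)
   apply (simp only: seg_ccw, rule gen_ccw_x; assumption)
  apply (simp only: seg_cw, rule gen_cw_x; assumption)
  done

lemma r3_y: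
  "distinct [x, y, z] \<Longrightarrow> y \<notin> fst ` set u \<Longrightarrow> y \<notin> fst ` set v \<Longrightarrow> y \<notin> fst ` set q \<Longrightarrow> y \<notin> fst ` set t \<Longrightarrow>
 fiF (u @ r3_seg ccw e x y z 1 @ v @ r3_seg ccw e x y z 2 @ q @ r3_seg ccw e x y z 3 @ t) y =
         fiF (u @ rev (r3_seg ccw e x y z 1) @ v @ rev (r3_seg ccw e x y z 2) @ q @ rev (r3_seg ccw e x y z 3) @ t) y"
  apply (cases ccw)
   apply (simp only: seg_ccw, rule gen_ccw_y; assumption)
  apply (simp only: seg_cw, rule gen_cw_y; assumption)
  done

lemma r3_z:
  "distinct [x, y, z] \<Longrightarrow> z \<notin> fst ` set u \<Longrightarrow> z \<notin> fst ` set v \<Longrightarrow> z \<notin> fst ` set q \<Longrightarrow> z \<notin> fst ` set t \<Longrightarrow>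
 fiF (u @ r3_seg ccw e x y z 1 @ v @ r3_seg ccw e x y z 2 @ q @ r3_seg ccw e x y z 3 @ t) z =
         fiF (u @ rev (r3_seg ccw e x y z 1) @ v @ rev (r3_seg ccw e x y z 2) @ q @ rev (r3_seg ccw e x y z 3) @ t) z"
  apply (cases ccw)
   apply (simp only: seg_ccw, rule gen_ccw_z; assumption)
  apply (simp only: seg_cw, rule gen_cw_z; assumption)
  done

lemma r3_chords:
  "fst ` set (r3_seg ccw e x y z 1) \<subseteq> {x, y, z}"
  "fst ` set (r3_seg ccw e x y z 2) \<subseteq> {x, y, z}"
  "fst ` set (r3_seg ccw e x y z 3) \<subseteq> {x, y, z}"
  by (cases ccw; simp only: seg_ccw seg_cw; auto)+

lemma Inv_R3:
  assumes "distinct [x, y, z]" "{x, y, z} \<inter> gchords (u @ v @ q @ t) = {}"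
  shows "Inv g (u @ r3_seg ccw e x y z 1 @ v @ r3_seg ccw e x y z 2 @ q @ r3_seg ccw e x y z 3 @ t) =
         Inv g (u @ rev (r3_seg ccw e x y z 1) @ v @ rev (r3_seg ccw e x y z 2) @ q @ rev (r3_seg ccw e x y z 3) @ t)"
proof -
  obtain s1 s2 s3 where s: "s1 = r3_seg ccw e x y z 1" "s2 = r3_seg ccw e x y z 2" "s3 = r3_seg ccw e x y z 3"
    by blast
  have c1: "fst ` set s1 \<subseteq> {x, y, z}" "fst ` set s2 \<subseteq> {x, y, z}" "fst ` set s3 \<subseteq> {x, y, z}"
    unfolding s by (rule r3_chords)+
  have ch: "gchords (u @ s1 @ v @ s2 @ q @ s3 @ t) = gchords (u @ rev s1 @ v @ rev s2 @ q @ rev s3 @ t)"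
    unfolding gchords_def by simp
  have "fiF (u @ s1 @ v @ s2 @ q @ s3 @ t) c = fiF (u @ rev s1 @ v @ rev s2 @ q @ rev s3 @ t) c" for c
  proof (cases "c \<in> {x, y, z}")
    case True
    have nc: "c \<notin> fst ` set u" "c \<notin> fst ` set v" "c \<notin> fst ` set q" "c \<notin> fst ` set t"
      using True assms(2) unfolding gchords_def by auto
    from True have "c = x \<or> c = y \<or> c = z" by simp
    then show ?thesis
    proof (elim disjE)
      assume "c = x" then show ?thesis using r3_x[of x y z u v q t ccw e] assms(1) nc unfolding s by simp
    next
      assume "c = y" then show ?thesis using r3_y[of x y z u v q t ccw e] assms(1) nc unfolding s by simp
    next
      assume "c = z" then show ?thesis using r3_z[of x y z u v q t ccw e] assms(1) nc unfolding s by simp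
    qed
  next
    case False
    then have n: "c \<notin> fst ` set s1" "c \<notin> fst ` set s2" "c \<notin> fst ` set s3" using c1 by blast+
    have nr: "c \<notin> fst ` set (rev s1)" "c \<notin> fst ` set (rev s2)" "c \<notin> fst ` set (rev s3)" using n by simp_all
    have "fiF (u @ s1 @ (v @ s2 @ q @ s3 @ t)) c = fiF (u @ rev s1 @ (v @ s2 @ q @ s3 @ t)) c"
      using replace[OF n(1) nr(1)] by simp
    also have "\<dots> = fiF ((u @ rev s1 @ v) @ s2 @ (q @ s3 @ t)) c" by simp
    also have "\<dots> = fiF ((u @ rev s1 @ v) @ rev s2 @ (q @ s3 @ t)) c"
      using replace[OF n(2) nr(2), of "u @ rev s1 @ v" "q @ s3 @ t"] by simp
    also have "\<dots> = fiF ((u @ rev s1 @ v @ rev s2 @ q) @ s3 @ t) c" by simp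
    also have "\<dots> = fiF ((u @ rev s1 @ v @ rev s2 @ q) @ rev s3 @ t) c"
      using replace[OF n(3) nr(3), of "u @ rev s1 @ v @ rev s2 @ q" t] by simp
    finally show ?thesis by simp
  qed
  then have "Inv g (u @ s1 @ v @ s2 @ q @ s3 @ t) = Inv g (u @ rev s1 @ v @ rev s2 @ q @ rev s3 @ t)"
    unfolding Inv_def ch by simp
  then show ?thesis unfolding s .
qed

lemma wf_rot: "gauss_wf (rotate1 w) = gauss_wf w"
  by (simp add: gauss_wf_def)

lemma wf_block:
  assumes "set L = set M \<union> X" "\<And>c b. (c, b) \<in> X \<Longrightarrow> (c, \<not> b) \<in> X"
    "\<And>c b b'. (c, b) \<in> X \<Longrightarrow> (c, b') \<notin> set M" "distinct L = distinct M"
  shows "gauss_wf L = gauss_wf M"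
proof -
  have "(\<forall>c b. (c, b) \<in> set L \<longrightarrow> (c, \<not> b) \<in> set L) = (\<forall>c b. (c, b) \<in> set M \<longrightarrow> (c, \<not> b) \<in> set M)"
  proof
    assume H: "\<forall>c b. (c, b) \<in> set L \<longrightarrow> (c, \<not> b) \<in> set L"
    show "\<forall>c b. (c, b) \<in> set M \<longrightarrow> (c, \<not> b) \<in> set M"
    proof (intro allI impI)
      fix c b assume m: "(c, b) \<in> set M"
      then have "(c, \<not> b) \<in> set L" using H assms(1) by auto
      moreover have "(c, \<not> b) \<notin> X" using m assms(2,3) by blast
      ultimately show "(c, \<not> b) \<in> set M" using assms(1) by auto
    qed
  next
    assume H: "\<forall>c b. (c, b) \<in> set M \<longrightarrow> (c, \<not> b) \<in> set M"
    show "\<forall>c b. (c, b) \<in> set L \<longrightarrow> (c, \<not> b) \<in> set L"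
      using H assms(1,2) by auto
  qed
  then show ?thesis unfolding gauss_wf_def using assms(4) by simp
qed

lemma wf_R1: "c \<notin> gchords (u @ v) \<Longrightarrow> gauss_wf (u @ [(c, b), (c, \<not> b)] @ v) = gauss_wf (u @ v)"
proof -
  assume "c \<notin> gchords (u @ v)"
  then have fr: "\<And>b'. (c, b') \<notin> set u" "\<And>b'. (c, b') \<notin> set v"
    by (force simp: gchords_def)+
  show ?thesis
    by (rule wf_block[where X = "{(c, b), (c, \<not> b)}"]) (use fr in auto)
qed

lemma wf_R2: "c \<noteq> d \<Longrightarrow> c \<notin> gchords (u @ v @ z) \<Longrightarrow> d \<notin> gchords (u @ v @ z) \<Longrightarrow>
       p \<in> {[(c, \<not> b), (d, b)], [(d, b), (c, \<not> b)]} \<Longrightarrow>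
       gauss_wf (u @ [(c, b), (d, \<not> b)] @ v @ p @ z) = gauss_wf (u @ v @ z)"
proof -
  assume a: "c \<noteq> d" "c \<notin> gchords (u @ v @ z)" "d \<notin> gchords (u @ v @ z)"
     "p \<in> {[(c, \<not> b), (d, b)], [(d, b), (c, \<not> b)]}"
  then have fr: "\<And>b'. (c, b') \<notin> set u" "\<And>b'. (c, b') \<notin> set v" "\<And>b'. (c, b') \<notin> set z"
    "\<And>b'. (d, b') \<notin> set u" "\<And>b'. (d, b') \<notin> set v" "\<And>b'. (d, b') \<notin> set z"
    by (force simp: gchords_def)+
  show ?thesis
    by (rule wf_block[where X = "{(c, b), (d, \<not> b), (c, \<not> b), (d, b)}"]) (use fr a in auto)
qed

lemma wf_R3: "gauss_wf (u @ s1 @ v @ s2 @ q @ s3 @ t) = gauss_wf (u @ rev s1 @ v @ rev s2 @ q @ rev s3 @ t)"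
  unfolding gauss_wf_def by (simp add: ac_simps)

lemma wf_relabel:
  assumes "inj_on f (gchords w)"
  shows "gauss_wf w = gauss_wf (map (\<lambda>(c, b). (f c, b)) w)"
proof -
  let ?h = "\<lambda>(c::nat, b::bool). (f c, b)"
  have inj: "inj_on ?h (set w)" using assms
    unfolding inj_on_def gchords_def by force
  show ?thesis
  proof
    assume "gauss_wf w" then show "gauss_wf (map ?h w)"
      using inj by (auto simp: gauss_wf_def distinct_map)
  next
    assume A: "gauss_wf (map ?h w)"
    then have "distinct w" by (simp add: gauss_wf_def distinct_map)
    moreover have "(c, \<not> b) \<in> set w" if "(c, b) \<in> set w" for c b
    proof -
      have "(f c, b) \<in> set (map ?h w)" using that by force
      then have "(f c, \<not> b) \<in> set (map ?h w)" using A by (simp add: gauss_wf_def)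
      then obtain c' where c': "(c', \<not> b) \<in> set w" "f c' = f c" by auto
      have "c' \<in> gchords w" "c \<in> gchords w" using that c' by (force simp: gchords_def)+
      then have "c' = c" using c' assms by (metis inj_onD)
      then show ?thesis using c' by simp
    qed
    ultimately show "gauss_wf w" by (simp add: gauss_wf_def)
  qed
qed

lemma wf_step: "flat_step a b \<Longrightarrow> gauss_wf a = gauss_wf b"
proof (induction rule: flat_step.induct)
  case (rotate w) then show ?case by (rule wf_rot[symmetric])
next
  case (relabel f w) then show ?case by (rule wf_relabel)
next
  case (R1 c u v b) then show ?case by (rule wf_R1)
next
  case (R2 c d u v z p b) then show ?case by (rule wf_R2)
next
  case (R3 x y z u v q t s1 ccw e s2 s3) show ?case by (rule wf_R3)
qed

lemma Inv_step: "flat_step a b \<Longrightarrow> gauss_wf a \<Longrightarrow> (\<And>m. g (- m) = - g m) \<Longrightarrow> Inv g a = Inv g b"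
proof (induction rule: flat_step.induct)
  case (rotate w) then show ?case by (simp add: Inv_rotate)
next
  case (relabel f w) then show ?case by (simp add: Inv_relabel)
next
  case (R1 c u v b) then show ?case using Inv_R1[where c=c and u=u and v=v and b=b and g=g] by simp
next
  case (R2 c d u v z p b) then show ?case using Inv_R2[of c d u v z p b g] by simp
next
  case (R3 x y z u v q t s1 ccw e s2 s3) then show ?case using Inv_R3[of x y z u v q t g ccw e] by simp
qed

lemma chain:
  assumes "(symclp flat_step)\<^sup>*\<^sup>* a b" "gauss_wf a" "\<And>m. g (- m) = - g m"
  shows "gauss_wf b \<and> Inv g a = Inv g b"
  using assms(1)
proof (induction rule: rtranclp_induct)
  case base then show ?case using assms(2) by simp
next
  case (step y z)
  from step.hyps(2) show ?case
  proof (cases rule: symclpE)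
    assume st: "flat_step y z"
    have w: "gauss_wf z" using wf_step[OF st] step.IH by simp
    have "Inv g y = Inv g z" using Inv_step[of y z g] st step.IH assms(3) by blast
    then show ?thesis using w step.IH by simp
  next
    assume st: "flat_step z y"
    have w: "gauss_wf z" using wf_step[OF st] step.IH by simp
    have "Inv g z = Inv g y" using Inv_step[of z y g] st w assms(3) by blast
    then show ?thesis using w step.IH by simp
  qed
qed

lemma sum_app_idx:
  "(\<Sum>k<length (xs @ ys). G k ((xs @ ys) ! k)) =
   (\<Sum>k<length xs. G k (xs ! k)) + (\<Sum>k<length ys. G (length xs + k) (ys ! k))"
proof (induction xs arbitrary: G)
  case Nil then show ?case by simp
next
  case (Cons x xs)
  have "(\<Sum>k<length ((x # xs) @ ys). G k (((x # xs) @ ys) ! k)) =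
        G 0 x + (\<Sum>k<length (xs @ ys). G (Suc k) ((xs @ ys) ! k))"
    by (simp only: append_Cons length_Cons sum.lessThan_Suc_shift nth_Cons_0 nth_Cons_Suc)
  also have "\<dots> = G 0 x + (\<Sum>k<length xs. G (Suc k) (xs ! k)) + (\<Sum>k<length ys. G (Suc (length xs + k)) (ys ! k))"
    using Cons[of "\<lambda>k. G (Suc k)"] by (simp add: add.assoc)
  also have "\<dots> = (\<Sum>k<length (x # xs). G k ((x # xs) ! k)) + (\<Sum>k<length ys. G (length (x # xs) + k) (ys ! k))"
    by (simp only: length_Cons sum.lessThan_Suc_shift nth_Cons_0 nth_Cons_Suc add_Suc)
  finally show ?case .
qed

lemma sum_cons_idx:
  "(\<Sum>k<length (x # ys). G k ((x # ys) ! k)) = G 0 x + (\<Sum>k<length ys. G (Suc k) (ys ! k))"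
  by (simp only: length_Cons sum.lessThan_Suc_shift nth_Cons_0 nth_Cons_Suc)

lemma sum_list_idx: "sum_list (map f xs) = (\<Sum>k<length xs. f (xs ! k))"
  by (simp add: sum_list_sum_nth atLeast0LessThan)

lemma total_zero_gen:
  assumes "gauss_wf v" "\<And>c b. f (c, \<not> b) = - f (c, b)" shows "sum_list (map f v) = (0::int)"
proof -
  have dist: "distinct v" using assms by (simp add: gauss_wf_def)
  let ?h = "\<lambda>(c::nat, b::bool). (c, \<not> b)"
  have hs: "?h ` set v = set v" using assms unfolding gauss_wf_def by (force simp: image_iff)
  have inj: "inj_on ?h (set v)" by (auto simp: inj_on_def)
  have "sum_list (map f v) = (\<Sum>x\<in>set v. f x)" using dist by (simp add: sum_list_distinct_conv_sum_set)
  also have "\<dots> = (\<Sum>x\<in>?h ` set v. f x)" using hs by simp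
  also have "\<dots> = (\<Sum>x\<in>set v. f (?h x))" using inj by (simp add: sum.reindex)
  also have "\<dots> = - (\<Sum>x\<in>set v. f x)"
    by (subst sum_negf[symmetric]) (auto intro!: sum.cong simp: assms(2) split_def)
  finally show ?thesis using dist by (simp add: sum_list_distinct_conv_sum_set)
qed

definition tau :: "(nat \<Rightarrow> int) \<Rightarrow> nat \<times> bool \<Rightarrow> int" where "tau s e = s (fst e) * sgm e"

lemma gpos_nth: "distinct w \<Longrightarrow> i < length w \<Longrightarrow> gpos w (w ! i) = i"
  unfolding gpos_def by (rule the_equality) (auto simp: nth_eq_iff_index_eq)

lemma in_arc_end: "\<not> in_arc p q p" "\<not> in_arc p q q"
  by (auto simp: in_arc_def)

lemma gind_pos:
  assumes wf: "gauss_wf w" and c: "c \<in> gchords w"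
  shows "gind w s c = (\<Sum>k<length w. if on_right w c k then tau s (w ! k) else 0)"
proof -
  let ?C = "gchords w"
  let ?R = "on_right w c"
  have dist: "distinct w" using wf by (simp add: gauss_wf_def)
  have Rc: "\<not> ?R (tailpos w c)" "\<not> ?R (headpos w c)" unfolding on_right_def by (simp_all add: in_arc_end)
  have A: "gind w s c = (\<Sum>d\<in>?C. (if ?R (headpos w d) then s d else 0) - (if ?R (tailpos w d) then s d else 0))"
    unfolding gind_def
    by (simp add: sum.inter_filter sum_subtractf[symmetric], rule sum.cong)
       (use Rc in \<open>auto simp: crosses_LR_def crosses_RL_def\<close>)
  have setw: "set w = (\<lambda>d. (d, False)) ` ?C \<union> (\<lambda>d. (d, True)) ` ?C"
  proof (intro equalityI subsetI)
    fix x assume x: "x \<in> set w"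
    then have "fst x \<in> ?C" by (simp add: gchords_def)
    then show "x \<in> (\<lambda>d. (d, False)) ` ?C \<union> (\<lambda>d. (d, True)) ` ?C"
      by (cases x; cases "snd x") auto
  next
    fix x assume "x \<in> (\<lambda>d. (d, False)) ` ?C \<union> (\<lambda>d. (d, True)) ` ?C"
    then obtain d b where x: "x = (d, b)" "d \<in> ?C" by auto
    then obtain b' where "(d, b') \<in> set w" by (auto simp: gchords_def)
    then have "(d, b) \<in> set w \<or> (d, \<not> b) \<in> set w" by (cases "b = b'") auto
    then show "x \<in> set w"
    proof
      assume "(d, b) \<in> set w" then show ?thesis using x by simp
    next
      assume h: "(d, \<not> b) \<in> set w"
      have "(d, \<not> \<not> b) \<in> set w" using wf h unfolding gauss_wf_def by blast
      then show ?thesis using x by simp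
    qed
  qed
  let ?G = "\<lambda>x. if ?R (gpos w x) then tau s x else 0"
  have B: "(\<Sum>x\<in>set w. ?G x) = (\<Sum>d\<in>?C. (if ?R (headpos w d) then s d else 0) - (if ?R (tailpos w d) then s d else 0))"
  proof -
    have disj: "(\<lambda>d. (d, False)) ` ?C \<inter> (\<lambda>d. (d, True)) ` ?C = {}" by auto
    have "(\<Sum>x\<in>set w. ?G x) = (\<Sum>x\<in>(\<lambda>d. (d, False)) ` ?C. ?G x) + (\<Sum>x\<in>(\<lambda>d. (d, True)) ` ?C. ?G x)"
      unfolding setw by (rule sum.union_disjoint) (use disj in auto)
    also have "\<dots> = (\<Sum>d\<in>?C. ?G (d, False)) + (\<Sum>d\<in>?C. ?G (d, True))"
      by (simp add: sum.reindex inj_on_def)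
    also have "\<dots> = (\<Sum>d\<in>?C. (if ?R (headpos w d) then s d else 0) - (if ?R (tailpos w d) then s d else 0))"
    proof -
      have 1: "(\<Sum>d\<in>?C. ?G (d, False)) = (\<Sum>d\<in>?C. if ?R (headpos w d) then s d else 0)"
        by (rule sum.cong) (simp_all add: tau_def sgm_def headpos_def)
      have 2: "(\<Sum>d\<in>?C. ?G (d, True)) = - (\<Sum>d\<in>?C. if ?R (tailpos w d) then s d else 0)"
        by (subst sum_negf[symmetric], rule sum.cong) (simp_all add: tau_def sgm_def tailpos_def)
      show ?thesis unfolding 1 2 sum_subtractf by simp
    qed
    finally show ?thesis .
  qed
  have C: "(\<Sum>x\<in>set w. ?G x) = (\<Sum>k<length w. ?G (w ! k))"
  proof -
    have img: "set w = (nth w) ` {..<length w}" by (force simp: in_set_conv_nth image_iff)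
    have inj: "inj_on (nth w) {..<length w}" using dist by (simp add: inj_on_nth)
    show ?thesis unfolding img using inj by (simp add: sum.reindex)
  qed
  have D: "(\<Sum>k<length w. ?G (w ! k)) = (\<Sum>k<length w. if ?R k then tau s (w ! k) else 0)"
    by (rule sum.cong) (simp_all add: gpos_nth[OF dist])
  show ?thesis using A B C D by simp
qed

lemma arc_in:
  fixes l :: gword
  assumes l: "l = a @ e1 # b @ e2 # d"
  shows "(\<Sum>k<length l. if in_arc (length a) (Suc (length a + length b)) k then f (l ! k) else (0::int))
         = sum_list (map f b)"
proof -
  let ?la = "length a" and ?j = "Suc (length a + length b)"
  have "(\<Sum>k<length l. if in_arc ?la ?j k then f (l ! k) else 0) = (\<Sum>k\<in>{k\<in>{..<length l}. in_arc ?la ?j k}. f (l ! k))"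
    by (simp only: sum.inter_filter finite_lessThan)
  also have "{k\<in>{..<length l}. in_arc ?la ?j k} = (\<lambda>i. Suc ?la + i) ` {..<length b}"
  proof (intro equalityI subsetI)
    fix k assume "k \<in> {k\<in>{..<length l}. in_arc ?la ?j k}"
    then have "?la < k" "k < ?j" by (auto simp: in_arc_def)
    then show "k \<in> (\<lambda>i. Suc ?la + i) ` {..<length b}"
      by (auto simp: image_iff intro!: bexI[of _ "k - Suc ?la"])
  qed (auto simp: in_arc_def l)
  also have "(\<Sum>k\<in>(\<lambda>i. Suc ?la + i) ` {..<length b}. f (l ! k)) = (\<Sum>i<length b. f (l ! (Suc ?la + i)))"
    by (subst sum.reindex) (auto simp: inj_on_def)
  also have "\<dots> = (\<Sum>i<length b. f (b ! i))"
    by (rule sum.cong) (simp_all add: l nth_append)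
  finally show ?thesis by (simp add: sum_list_idx)
qed

lemma arc_out:
  fixes l :: gword
  assumes l: "l = a @ e1 # b @ e2 # d"
  shows "(\<Sum>k<length l. if in_arc (Suc (length a + length b)) (length a) k then f (l ! k) else (0::int))
         = sum_list (map f a) + sum_list (map f d)"
proof -
  let ?la = "length a" and ?j = "Suc (length a + length b)"
  have "(\<Sum>k<length l. if in_arc ?j ?la k then f (l ! k) else 0) = (\<Sum>k\<in>{k\<in>{..<length l}. in_arc ?j ?la k}. f (l ! k))"
    by (simp only: sum.inter_filter finite_lessThan)
  also have "{k\<in>{..<length l}. in_arc ?j ?la k} = {..<?la} \<union> (\<lambda>i. Suc ?j + i) ` {..<length d}"
  proof (intro equalityI subsetI)
    fix k assume k: "k \<in> {k\<in>{..<length l}. in_arc ?j ?la k}"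
    then have "k < ?la \<or> ?j < k" "k < length l" by (auto simp: in_arc_def)
    then show "k \<in> {..<?la} \<union> (\<lambda>i. Suc ?j + i) ` {..<length d}"
      by (auto simp: image_iff l intro!: bexI[of _ "k - Suc ?j"])
  qed (auto simp: in_arc_def l)
  also have "(\<Sum>k\<in>{..<?la} \<union> (\<lambda>i. Suc ?j + i) ` {..<length d}. f (l ! k)) =
             (\<Sum>k<?la. f (l ! k)) + (\<Sum>k\<in>(\<lambda>i. Suc ?j + i) ` {..<length d}. f (l ! k))"
    by (rule sum.union_disjoint) auto
  also have "(\<Sum>k\<in>(\<lambda>i. Suc ?j + i) ` {..<length d}. f (l ! k)) = (\<Sum>i<length d. f (l ! (Suc ?j + i)))"
    by (subst sum.reindex) (auto simp: inj_on_def)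
  also have "\<dots> = (\<Sum>i<length d. f (d ! i))"
    by (rule sum.cong) (simp_all add: l nth_append)
  also have "(\<Sum>k<?la. f (l ! k)) = (\<Sum>k<?la. f (a ! k))"
    by (rule sum.cong) (simp_all add: l nth_append)
  finally show ?thesis by (simp add: sum_list_idx)
qed

lemma gind_flat:
  assumes wf: "gauss_wf w" and c: "c \<in> gchords w" and sg: "\<forall>d\<in>gchords w. s d = 1 \<or> s d = -1"
  shows "gind w s c = s c * fiF (flatten w s) c"
proof -
  obtain a e1 b e2 d where v: "w = a @ [e1] @ b @ [e2] @ d" and f: "fst e1 = c" "fst e2 = c"
    "snd e2 = (\<not> snd e1)" "c \<notin> fst ` set a" "c \<notin> fst ` set b" "c \<notin> fst ` set d"
    using decomp[OF wf c] by blast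
  have v': "w = a @ e1 # b @ e2 # d" using v by simp
  have dist: "distinct w" using wf by (simp add: gauss_wf_def)
  let ?la = "length a" and ?j = "Suc (length a + length b)"
  have n1: "w ! ?la = e1" "?la < length w" using v' by (simp_all add: nth_append)
  have n2: "w ! ?j = e2" "?j < length w" using v' by (simp_all add: nth_append)
  have g1: "gpos w e1 = ?la" using gpos_nth[OF dist n1(2)] n1(1) by simp
  have g2: "gpos w e2 = ?j" using gpos_nth[OF dist n2(2)] n2(1) by simp
  have e1: "e1 = (c, snd e1)" and e2: "e2 = (c, \<not> snd e1)" using f by (auto simp: prod_eq_iff)
  let ?t = "tau s"
  have tot: "sum_list (map ?t w) = 0"
    by (rule total_zero_gen[OF wf]) (simp add: tau_def sgm_def)
  have te: "?t e1 + ?t e2 = 0" using f by (simp add: tau_def sgm_def)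
  have G: "gind w s c = (\<Sum>k<length w. if in_arc (tailpos w c) (headpos w c) k then ?t (w ! k) else 0)"
    using gind_pos[OF wf c] by (simp add: on_right_def)
  have sc: "s c = 1 \<or> s c = -1" using sg c by blast
  define fl where "fl = (\<lambda>(c::nat, b::bool). (c, if s c = 1 then b else \<not> b))"
  have fst_fl: "fst (fl e) = fst e" for e by (simp add: fl_def split_def)
  have flw: "flatten w s = map fl a @ [fl e1] @ map fl b @ [fl e2] @ map fl d"
    unfolding flatten_def fl_def using v by simp
  have nfa: "c \<notin> fst ` set (map fl a)" "c \<notin> fst ` set (map fl b)" using f(4,5) fst_fl
    by (simp_all add: image_image)
  have F: "fiF (flatten w s) c = sgn1 (fl e1) * SS (map fl b)"
    unfolding flw by (rule linear) (use nfa fst_fl f in auto)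
  have sfl: "sgn1 (fl e1) = s c * sgn1 e1" using sc f(1) by (auto simp: fl_def sgn1_def split_def)
  have bC: "fst e \<in> gchords w" if "e \<in> set b" for e using that v by (auto simp: gchords_def)
  have SSb: "SS (map fl b) = sum_list (map ?t b)"
    unfolding SS_def map_map
  proof (rule arg_cong[where f = sum_list], rule map_cong[OF refl])
    fix e assume "e \<in> set b"
    then have "s (fst e) = 1 \<or> s (fst e) = -1" using sg bC by blast
    then show "(sgm \<circ> fl) e = ?t e" by (auto simp: fl_def sgm_def tau_def split_def)
  qed
  show ?thesis
  proof (cases "snd e1")
    case True
    have "tailpos w c = ?la" "headpos w c = ?j"
      using g1 g2 e1 e2 True by (auto simp: tailpos_def headpos_def)
    then have "gind w s c = sum_list (map ?t b)" using G arc_in[OF v', of ?t] by simp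
    then show ?thesis using F sfl SSb True sc by (auto simp: sgn1_def)
  next
    case False
    have "tailpos w c = ?j" "headpos w c = ?la"
      using g1 g2 e1 e2 False by (auto simp: tailpos_def headpos_def)
    then have "gind w s c = sum_list (map ?t a) + sum_list (map ?t d)" using G arc_out[OF v', of ?t] by simp
    also have "\<dots> = - sum_list (map ?t b)" using tot te v' by simp
    finally show ?thesis using F sfl SSb False sc by (auto simp: sgn1_def)
  qed
qed

definition gn :: "int \<Rightarrow> int \<Rightarrow> int" where
  "gn n m = (if m = n then 1 else 0) - (if m = - n then 1 else 0)"

lemma gn_odd: "gn n (- m) = - gn n m" by (auto simp: gn_def)

lemma gchords_flatten: "gchords (flatten w s) = gchords w"
  by (simp add: gchords_def flatten_def image_image split_def)

lemma wf_flatten: assumes "gauss_wf w" shows "gauss_wf (flatten w s)"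
proof -
  let ?h = "\<lambda>(c::nat, b::bool). (c, if s c = 1 then b else \<not> b)"
  have inj: "inj_on ?h (set w)" by (auto simp: inj_on_def split: if_splits)
  have d: "distinct (map ?h w)" using assms inj by (simp add: gauss_wf_def distinct_map)
  have "(c, \<not> b) \<in> set (map ?h w)" if "(c, b) \<in> set (map ?h w)" for c b
  proof -
    from that obtain b0 where b0: "(c, b0) \<in> set w" "b = (if s c = 1 then b0 else \<not> b0)" by auto
    then have "(c, \<not> b0) \<in> set w" using assms by (simp add: gauss_wf_def)
    then have "?h (c, \<not> b0) \<in> set (map ?h w)" unfolding set_map by (rule imageI)
    moreover have "?h (c, \<not> b0) = (c, \<not> b)" using b0(2) by simp
    ultimately show ?thesis by metis
  qed
  then show ?thesis using d unfolding gauss_wf_def flatten_def by blast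
qed

lemma writhe_inv:
  assumes wf: "gauss_wf w" and sg: "\<forall>c\<in>gchords w. s c = 1 \<or> s c = -1" and n: "n \<noteq> 0"
  shows "writhe_coeff w s n - writhe_coeff w s (- n) = Inv (gn n) (flatten w s)"
proof -
  have "writhe_coeff w s n - writhe_coeff w s (- n) =
        (\<Sum>c\<in>gchords w. (if gind w s c = n then s c else 0) - (if gind w s c = - n then s c else 0))"
    using n by (simp add: writhe_coeff_def sum.inter_filter sum_subtractf)
  also have "\<dots> = (\<Sum>c\<in>gchords w. gn n (fiF (flatten w s) c))"
  proof (rule sum.cong[OF refl])
    fix c assume c: "c \<in> gchords w"
    have "gind w s c = s c * fiF (flatten w s) c" by (rule gind_flat[OF wf c sg])
    moreover have "s c = 1 \<or> s c = -1" using sg c by blast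
    ultimately show "(if gind w s c = n then s c else 0) - (if gind w s c = - n then s c else 0) =
                     gn n (fiF (flatten w s) c)"
      by (auto simp: gn_def)
  qed
  finally show ?thesis by (simp add: Inv_def gchords_flatten)
qed

theorem corollary3p5:
  fixes w :: gword and s :: "nat \<Rightarrow> int"
  assumes "gauss_wf w"
    and "\<forall>c\<in>gchords w. s c = 1 \<or> s c = -1"
    and "\<exists>n. writhe_coeff w s n \<noteq> writhe_coeff w s (- n)"
  shows "\<not> flat_equiv (flatten w s) []"
proof
  assume eq: "flat_equiv (flatten w s) []"
  from assms(3) obtain n where n: "writhe_coeff w s n \<noteq> writhe_coeff w s (- n)" by blast
  then have n0: "n \<noteq> 0" by auto
  have "Inv (gn n) (flatten w s) = Inv (gn n) []"
    using chain[OF eq[unfolded flat_equiv_def] wf_flatten[OF assms(1)], of "gn n"] gn_odd by blast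
  moreover have "Inv (gn n) [] = 0" by (simp add: Inv_def gchords_def)
  ultimately show False using writhe_inv[OF assms(1,2) n0] n by simp
qed

end
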